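(* Let $\boldsymbol{\mathcal{D}} = \begin{pmatrix}\boldsymbol{W}_p\\ \boldsymbol{U}_f \\ \boldsymbol{Y}_f\end{pmatrix}$ be a data matrix with full row rank and LQ decomposition as described in the context, let $\boldsymbol{Z}:=\begin{pmatrix}\boldsymbol{W}_p\\ \boldsymbol{U}_f\end{pmatrix}$, $\boldsymbol{\Pi}:=\boldsymbol{Z}^+\boldsymbol{Z}$, $\boldsymbol{\Pi}_\perp:=\boldsymbol{I}-\boldsymbol{\Pi}$, and $\lambda_a>0$. Then $\boldsymbol{\gamma}$-DDPC with regularization $\tilde h(\boldsymbol{\gamma}) = \lambda_a \|\boldsymbol{\gamma}_2\|_2^2$ and the additional constraint $\boldsymbol{\gamma}_3 = \boldsymbol{0}$ is equivalent to DeePC with regularization $h(\boldsymbol{a}) = \lambda_a \|\boldsymbol{\Pi}\boldsymbol{a}\|_2^2$ (or, alternatively, $h(\boldsymbol{a}) = \lambda_a \|\boldsymbol{a}\|_2^2$) and the additional constraint $\boldsymbol{\Pi}_\perp \boldsymbol{a} = \boldsymbol{0}$. Furthermore, both schemes are equivalent to SPC with the additional regularization $h^\ast(\boldsymbol{\xi}, \mathbf{u}_f, \mathbf{y}_f) = \lambda_a \|\mathbf{u}_f-\boldsymbol{U}_f \boldsymbol{W}_p^+\boldsymbol{\xi}\|_{\boldsymbol{\mathcal{R}}_\text{reg}}^2$, where $\boldsymbol{\mathcal{R}}_\text{reg} :=\left(\boldsymbol{U}_f\left(\boldsymbol{I}-\boldsymbol{W}_p^+\boldsymbol{W}_p\r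ight)\boldsymbol{U}_f^\top\right)^{-1}$.
   Context: $\boldsymbol{M}^+$ denotes the Moore–Penrose pseudoinverse and $\|\boldsymbol{x}\|_{\boldsymbol{M}}^2 := \boldsymbol{x}^\top\boldsymbol{M}\boldsymbol{x}$. Data: $m$ inputs, $p$ outputs, past horizon $N_p$, future horizon $N_f$, $L=N_p+N_f$, and $\ell$ data trajectories. The data matrix $\boldsymbol{\mathcal{D}}\in\mathbb{R}^{L(m+p)\times\ell}$ has blocks $\boldsymbol{W}_p\in\mathbb{R}^{N_p(m+p)\times\ell}$ (past inputs and outputs), $\boldsymbol{U}_f\in\mathbb{R}^{mN_f\times \ell}$, $\boldsymbol{Y}_f\in\mathbb{R}^{pN_f\times\ell}$ and is assumed to have full row rank. Its LQ decomposition is $\boldsymbol{\mathcal{D}} = \begin{pmatrix} \boldsymbol{L}_{11} & \boldsymbol{0} & \boldsymbol{0} & \boldsymbol{0} \\ \boldsymbol{L}_{21} & \boldsymbol{L}_{22} & \boldsymbol{0} & \boldsymbol{0} \\ \boldsymbol{L}_{31} & \boldsymbol{L}_{32} & \boldsymbol{L}_{33} & \boldsymbol{0} \end{pmatrix}\begin{pmatrix}\boldsymbol{Q}_1\\ \boldsymbol{Q}_2\\ \boldsymbol{Q}_3\\ \boldsymbol{Q}_4\end{pmatrix}$, with non-singular square diagonal blocks $\boldsymbol{L}_{11},\boldsymbol{L}_{22},\boldsymbol{L}_{33}$ (of sizes matching $\boldsymbol{W}_p,\boldsymbol{U}_f,\boldsymbol{Y}_f$) and $\boldsymbol{Q}=\begin{pmatrix}\boldsymbol{Q}_1^\top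 & \boldsymbol{Q}_2^\top&\boldsymbol{Q}_3^\top&\boldsymbol{Q}_4^\top\end{pmatrix}^\top\in\mathbb{R}^{\ell\times\ell}$ orthogonal; $\boldsymbol{\gamma}_i := \boldsymbol{Q}_i\boldsymbol{a}$. Given current past I/O data $\boldsymbol{\xi}\in\mathbb{R}^{N_p(m+p)}$, a cost $J(\boldsymbol{\xi},\mathbf{u}_f,\mathbf{y}_f)$ and constraint sets $\mathcal{U}$, $\mathcal{Y}$: DeePC with regularization $h$ is the problem $\min_{\mathbf{u}_f,\mathbf{y}_f,\boldsymbol{a}} J(\boldsymbol{\xi},\mathbf{u}_f,\mathbf{y}_f)+h(\boldsymbol{a})$ s.t. $(\boldsymbol{\xi};\mathbf{u}_f;\mathbf{y}_f)=\boldsymbol{\mathcal{D}}\boldsymbol{a}$, $(\mathbf{u}_f,\mathbf{y}_f)\in\mathcal{U}\times\mathcal{Y}$ (plus any stated additional constraint on $\boldsymbol{a}$). $\boldsymbol{\gamma}$-DDPC with regularization $\tilde h$ is the problem $\min_{\mathbf{u}_f,\mathbf{y}_f,\boldsymbol{\gamma}_2,\boldsymbol{\gamma}_3} J(\boldsymbol{\xi},\mathbf{u}_f,\mathbf{y}_f)+\tilde h(\boldsymbol{\gamma})$ s.t. $\boldsymbol{\gamma}_1=\boldsymbol{L}_{11}^{-1}\boldsymbol{\xi}$, $\mathbf{u}_f = \boldsymbol{L}_{21}\boldsymbol{\gamma}_1+\boldsymbol{L}_{22}\boldsymbol{\gamma}_2$, $\mathbf{y}_f=\boldsymbol{L}_{31}\boldsymbol{\gamma}_1+\boldsymbol{L}_{32}\boldsymbol{\gamma}_2+\boldsymbol{L}_{33}\boldsymbol{\gamma}_3$,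 $(\mathbf{u}_f,\mathbf{y}_f)\in\mathcal{U}\times\mathcal{Y}$ (i.e., $\boldsymbol{\gamma}_4=\boldsymbol{0}$ is fixed), plus any stated additional constraint on the $\boldsymbol{\gamma}_i$. SPC with additional regularization $h^\ast$ is the problem $\min_{\mathbf{u}_f,\mathbf{y}_f} J(\boldsymbol{\xi},\mathbf{u}_f,\mathbf{y}_f)+h^\ast(\boldsymbol{\xi},\mathbf{u}_f,\mathbf{y}_f)$ s.t. $\mathbf{y}_f = \boldsymbol{K}_{\text{SPC}}\begin{pmatrix}\boldsymbol{\xi}\\ \mathbf{u}_f\end{pmatrix}$, $(\mathbf{u}_f,\mathbf{y}_f)\in\mathcal{U}\times\mathcal{Y}$, where $\boldsymbol{K}_{\text{SPC}} := \boldsymbol{Y}_f\boldsymbol{Z}^+$ (the minimizer of $\|\boldsymbol{Y}_f-\boldsymbol{K}\boldsymbol{Z}\|_F^2$). Two such optimal control problems are called equivalent if, for every $\boldsymbol{\xi}$, they yield the same optimal predicted input/output trajectories $(\mathbf{u}_f^\ast,\mathbf{y}_f^\ast)$ (not necessarily the same optimal cost). *)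

theory Defs
  imports "Jordan_Normal_Form.DL_Rank"
begin

definition pinv :: "real mat \<Rightarrow> real mat" where
  "pinv A = (THE X. X \<in> carrier_mat (dim_col A) (dim_row A) \<and>
              A * X * A = A \<and> X * A * X = X \<and>
              transpose_mat (A * X) = A * X \<and> transpose_mat (X * A) = X * A)"

definition minv :: "real mat \<Rightarrow> real mat" where
  "minv A = (THE B. B \<in> carrier_mat (dim_row A) (dim_row A) \<and>
              A * B = 1\<^sub>m (dim_row A) \<and> B * A = 1\<^sub>m (dim_row A))"

definition full_row_rank :: "real mat \<Rightarrow> bool" where
  "full_row_rank A \<longleftrightarrow> vec_space.rank (dim_row A) A = dim_row A"

definition sqnorm :: "real vec \<Rightarrow> real" where
  "sqnorm x = x \<bullet> x"

definition wsqnorm :: "real mat \<Rightarrow> real vec \<Rightarrow> real" where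
  "wsqnorm M x = x \<bullet> (M *\<^sub>v x)"

definition row_block :: "real mat \<Rightarrow> nat \<Rightarrow> nat \<Rightarrow> real mat" where
  "row_block Q off k = mat k (dim_col Q) (\<lambda>(i, j). Q $$ (i + off, j))"

(* Set of optimal predicted trajectories (u_f^opt, y_f^opt) of an optimal control problem with
   decision variable z, feasibility predicate feas, objective f, and output map out. *)
definition opt_traj :: "('z \<Rightarrow> bool) \<Rightarrow> ('z \<Rightarrow> real) \<Rightarrow> ('z \<Rightarrow> 'o) \<Rightarrow> 'o set" where
  "opt_traj feas f out = out ` {z. feas z \<and> (\<forall>z'. feas z' \<longrightarrow> f z \<le> f z')}"

(* DeePC with regularization h and additional constraint C on a.
   Decision variables (u_f, y_f, a); (xi; u_f; y_f) = D a is written blockwise. *)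
definition deepc_opt ::
  "real mat \<Rightarrow> real mat \<Rightarrow> real mat \<Rightarrow>
   (real vec \<Rightarrow> real vec \<Rightarrow> real vec \<Rightarrow> real) \<Rightarrow> real vec set \<Rightarrow> real vec set \<Rightarrow>
   (real vec \<Rightarrow> real) \<Rightarrow> (real vec \<Rightarrow> bool) \<Rightarrow> real vec \<Rightarrow> (real vec \<times> real vec) set" where
  "deepc_opt Wp Uf Yf J Uc Yc h C xi =
     opt_traj
       (\<lambda>(u, y, a). a \<in> carrier_vec (dim_col Wp) \<and>
          xi = Wp *\<^sub>v a \<and> u = Uf *\<^sub>v a \<and> y = Yf *\<^sub>v a \<and> u \<in> Uc \<and> y \<in> Yc \<and> C a)
       (\<lambda>(u, y, a). J xi u y + h a)
       (\<lambda>(u, y, a). (u, y))"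

(* gamma-DDPC with regularization ht (a function of gamma_1, gamma_2, gamma_3; gamma_4 = 0 fixed)
   and additional constraint C on (gamma_2, gamma_3). Decision variables (u_f, y_f, gamma_2, gamma_3). *)
definition gamma_ddpc_opt ::
  "real mat \<Rightarrow> real mat \<Rightarrow> real mat \<Rightarrow> real mat \<Rightarrow> real mat \<Rightarrow> real mat \<Rightarrow>
   (real vec \<Rightarrow> real vec \<Rightarrow> real vec \<Rightarrow> real) \<Rightarrow> real vec set \<Rightarrow> real vec set \<Rightarrow>
   (real vec \<Rightarrow> real vec \<Rightarrow> real vec \<Rightarrow> real) \<Rightarrow> (real vec \<Rightarrow> real vec \<Rightarrow> bool) \<Rightarrow>
   real vec \<Rightarrow> (real vec \<times> real vec) set" where
  "gamma_ddpc_opt L11 L21 L22 L31 L32 L33 J Uc Yc ht C xi =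
     (let g1 = minv L11 *\<^sub>v xi in
      opt_traj
       (\<lambda>(u, y, g2, g3). g2 \<in> carrier_vec (dim_col L22) \<and> g3 \<in> carrier_vec (dim_col L33) \<and>
          u = L21 *\<^sub>v g1 + L22 *\<^sub>v g2 \<and>
          y = L31 *\<^sub>v g1 + L32 *\<^sub>v g2 + L33 *\<^sub>v g3 \<and> u \<in> Uc \<and> y \<in> Yc \<and> C g2 g3)
       (\<lambda>(u, y, g2, g3). J xi u y + ht g1 g2 g3)
       (\<lambda>(u, y, g2, g3). (u, y)))"

definition spc_opt ::
  "real mat \<Rightarrow> real mat \<Rightarrow> real mat \<Rightarrow>
   (real vec \<Rightarrow> real vec \<Rightarrow> real vec \<Rightarrow> real) \<Rightarrow> real vec set \<Rightarrow> real vec set \<Rightarrow>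
   (real vec \<Rightarrow> real vec \<Rightarrow> real vec \<Rightarrow> real) \<Rightarrow> real vec \<Rightarrow> (real vec \<times> real vec) set" where
  "spc_opt Wp Uf Yf J Uc Yc hs xi =
     (let K = Yf * pinv (Wp @\<^sub>r Uf) in
      opt_traj
       (\<lambda>(u, y). u \<in> carrier_vec (dim_row Uf) \<and>
          y = K *\<^sub>v (xi @\<^sub>v u) \<and> u \<in> Uc \<and> y \<in> Yc)
       (\<lambda>(u, y). J xi u y + hs xi u y)
       (\<lambda>(u, y). (u, y)))"

end

theory Submission
  imports Defs
begin

lemma mat_eq_vecI:
  fixes A B :: "'a::semiring_1 mat"
  assumes A: "A \<in> carrier_mat n m" and B: "B \<in> carrier_mat n m"
    and eq: "\<And>v. v \<in> carrier_vec m \<Longrightarrow> A *\<^sub>v v = B *\<^sub>v v"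
  shows "A = B"
proof (rule eq_matI)
  fix i j assume i: "i < dim_row B" and j: "j < dim_col B"
  have "(A *\<^sub>v unit_vec m j) $ i = (B *\<^sub>v unit_vec m j) $ i" using eq[of "unit_vec m j"] by simp
  then show "A $$ (i, j) = B $$ (i, j)" using A B i j by (simp add: mult_mat_vec_def)
qed (use A B in auto)

lemma minv_eq:
  assumes A: "A \<in> carrier_mat n n" and B: "B \<in> carrier_mat n n"
    and AB: "A * B = 1\<^sub>m n" and BA: "B * A = 1\<^sub>m n"
  shows "minv A = B"
  unfolding minv_def
proof (rule the_equality)
  show "B \<in> carrier_mat (dim_row A) (dim_row A) \<and> A * B = 1\<^sub>m (dim_row A) \<and> B * A = 1\<^sub>m (dim_row A)"
    using A B AB BA by auto
next
  fix C assume C: "C \<in> carrier_mat (dim_row A) (dim_row A) \<and> A * C = 1\<^sub>m (dim_row A) \<and> C * A = 1\<^sub>m (dim_row A)"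
  then have Cc: "C \<in> carrier_mat n n" and CA: "C * A = 1\<^sub>m n" using A by auto
  have "C = C * (A * B)" using AB Cc by simp
  also have "\<dots> = (C * A) * B" using A B Cc by simp
  also have "\<dots> = B" using CA B by simp
  finally show "C = B" .
qed

lemma pinv_eq:
  fixes A R :: "real mat"
  assumes A: "A \<in> carrier_mat n l" and R: "R \<in> carrier_mat l n"
    and AR: "A * R = 1\<^sub>m n" and RA: "transpose_mat (R * A) = R * A"
  shows "pinv A = R"
  unfolding pinv_def
proof (rule the_equality)
  have "A * R * A = A" using AR A by simp
  moreover have "R * A * R = R" using A R AR by simp
  ultimately show "R \<in> carrier_mat (dim_col A) (dim_row A) \<and> A * R * A = A \<and> R * A * R = R \<and>
      transpose_mat (A * R) = A * R \<and> transpose_mat (R * A) = R * A"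
    using A R AR RA by auto
next
  fix X assume X: "X \<in> carrier_mat (dim_col A) (dim_row A) \<and> A * X * A = A \<and> X * A * X = X \<and>
      transpose_mat (A * X) = A * X \<and> transpose_mat (X * A) = X * A"
  then have Xc: "X \<in> carrier_mat l n" and AXA: "A * X * A = A" and XA: "transpose_mat (X * A) = X * A"
    using A by auto
  have "A * X = A * X * (A * R)" using AR A Xc by simp
  also have "\<dots> = (A * X * A) * R" using A Xc R assoc_mult_mat[of "A*X" n n A l R n] by auto
  also have "\<dots> = 1\<^sub>m n" using AXA AR by simp
  finally have AX: "A * X = 1\<^sub>m n" .
  have h: "X * A = X * A * (R * A)"
  proof -
    have c: "A * R \<in> carrier_mat n n" "R * A \<in> carrier_mat l l" "X * A \<in> carrier_mat l l" using A R Xc by auto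
    have "X * A * (R * A) = X * (A * (R * A))" using A Xc c by simp
    also have "A * (R * A) = (A * R) * A" using A R by simp
    also have "X * \<dots> = X * (A * R) * A" using A Xc c by simp
    finally show ?thesis using AR A Xc by simp
  qed
  have "X * A = transpose_mat (X * A * (R * A))" using XA h by simp
  also have "transpose_mat (X * A * (R * A)) = transpose_mat (R * A) * transpose_mat (X * A)"
    using A Xc R by (intro transpose_mult) auto
  also have "\<dots> = R * A * (X * A)" using RA XA by simp
  also have "\<dots> = R * (A * X * A)"
  proof -
    have c: "X * A \<in> carrier_mat l l" "A * X \<in> carrier_mat n n" using A Xc by auto
    have "R * A * (X * A) = R * (A * (X * A))" using R A c by simp
    also have "A * (X * A) = A * X * A" using A Xc by simp
    finally show ?thesis .
  qed
  also have "\<dots> = R * A" using AXA by simp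
  finally have XARA: "X * A = R * A" .
  have "X = X * (A * R)" using AR Xc by simp
  also have "\<dots> = (X * A) * R" using A Xc R by simp
  also have "\<dots> = R * (A * R)" using XARA A R by simp
  also have "\<dots> = R" using AR R by simp
  finally show "X = R" .
qed

lemma opt_traj_eq:
  assumes 1: "\<And>z. feas1 z \<Longrightarrow> feas2 (\<phi> z) \<and> out2 (\<phi> z) = out1 z \<and> f1 z = f2 (\<phi> z) + c"
    and 2: "\<And>w. feas2 w \<Longrightarrow> feas1 (\<psi> w) \<and> out1 (\<psi> w) = out2 w \<and> f1 (\<psi> w) = f2 w + c"
  shows "opt_traj feas1 f1 out1 = opt_traj feas2 f2 out2"
  unfolding opt_traj_def
proof (intro equalityI subsetI)
  fix o1 assume "o1 \<in> out1 ` {z. feas1 z \<and> (\<forall>z'. feas1 z' \<longrightarrow> f1 z \<le> f1 z')}"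
  then obtain z where z: "feas1 z" "\<forall>z'. feas1 z' \<longrightarrow> f1 z \<le> f1 z'" and o1: "o1 = out1 z" by auto
  have "\<forall>w. feas2 w \<longrightarrow> f2 (\<phi> z) \<le> f2 w"
  proof (intro allI impI)
    fix w assume w: "feas2 w"
    have "f1 z \<le> f1 (\<psi> w)" using z 2[OF w] by auto
    then show "f2 (\<phi> z) \<le> f2 w" using 1[OF z(1)] 2[OF w] by auto
  qed
  then show "o1 \<in> out2 ` {w. feas2 w \<and> (\<forall>w'. feas2 w' \<longrightarrow> f2 w \<le> f2 w')}"
    using 1[OF z(1)] o1 by (intro image_eqI[of _ _ "\<phi> z"]) auto
next
  fix o2 assume "o2 \<in> out2 ` {z. feas2 z \<and> (\<forall>z'. feas2 z' \<longrightarrow> f2 z \<le> f2 z')}"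
  then obtain w where w: "feas2 w" "\<forall>z'. feas2 z' \<longrightarrow> f2 w \<le> f2 z'" and o2: "o2 = out2 w" by auto
  have "\<forall>z. feas1 z \<longrightarrow> f1 (\<psi> w) \<le> f1 z"
  proof (intro allI impI)
    fix z assume z: "feas1 z"
    have "f2 w \<le> f2 (\<phi> z)" using w 1[OF z] by auto
    then show "f1 (\<psi> w) \<le> f1 z" using 1[OF z] 2[OF w(1)] by auto
  qed
  then show "o2 \<in> out1 ` {w. feas1 w \<and> (\<forall>w'. feas1 w' \<longrightarrow> f1 w \<le> f1 w')}"
    using 2[OF w(1)] o2 by (intro image_eqI[of _ _ "\<psi> w"]) auto
qed

lemma invertible_obtain:
  fixes A :: "real mat"
  assumes A: "A \<in> carrier_mat n n" and inv: "invertible_mat A"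
  obtains B where "B \<in> carrier_mat n n" "A * B = 1\<^sub>m n" "B * A = 1\<^sub>m n"
proof -
  from inv obtain B where AB: "A * B = 1\<^sub>m (dim_row A)" and BA: "B * A = 1\<^sub>m (dim_row B)"
    unfolding invertible_mat_def inverts_mat_def by auto
  have "dim_col B = n" using arg_cong[OF AB, of dim_col] A by simp
  moreover have "dim_row B = n" using arg_cong[OF BA, of dim_col] A by simp
  ultimately show ?thesis using that[of B] AB BA A by auto
qed

lemma row_block_carrier[simp]: "row_block Q off k \<in> carrier_mat k (dim_col Q)"
  unfolding row_block_def by auto

lemma rb_orth:
  fixes Q :: "real mat"
  assumes Q: "Q \<in> carrier_mat l l" "Q * transpose_mat Q = 1\<^sub>m l"
    and k1: "o1 + k1 \<le> l" and k2: "o2 + k2 \<le> l"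
  shows "row_block Q o1 k1 * transpose_mat (row_block Q o2 k2) = mat k1 k2 (\<lambda>(i,j). if i + o1 = j + o2 then 1 else 0)"
proof (rule eq_matI)
  fix i j assume i: "i < dim_row (mat k1 k2 (\<lambda>(i,j). if i + o1 = j + o2 then (1::real) else 0))"
    and j: "j < dim_col (mat k1 k2 (\<lambda>(i,j). if i + o1 = j + o2 then (1::real) else 0))"
  then have i: "i < k1" and j: "j < k2" by auto
  have r1: "row (row_block Q o1 k1) i = row Q (i + o1)"
    using Q i k1 by (intro eq_vecI) (auto simp: row_block_def)
  have r2: "col (transpose_mat (row_block Q o2 k2)) j = col (transpose_mat Q) (j + o2)"
    using Q j k2 by (intro eq_vecI) (auto simp: row_block_def)
  have "(row_block Q o1 k1 * transpose_mat (row_block Q o2 k2)) $$ (i, j)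
      = row Q (i + o1) \<bullet> col (transpose_mat Q) (j + o2)"
    using i j Q r1 r2 by (simp add: row_block_def)
  also have "\<dots> = (Q * transpose_mat Q) $$ (i + o1, j + o2)" using Q(1) i j k1 k2 by simp
  also have "\<dots> = (if i + o1 = j + o2 then 1 else 0)" unfolding Q(2) using i j k1 k2 by simp
  finally show "(row_block Q o1 k1 * transpose_mat (row_block Q o2 k2)) $$ (i, j) =
     mat k1 k2 (\<lambda>(i,j). if i + o1 = j + o2 then 1 else 0) $$ (i, j)" using i j by simp
qed (use Q in \<open>auto simp: row_block_def\<close>)

lemma zero_mat_mult_vec[simp]: "(c :: real vec) \<in> carrier_vec nc \<Longrightarrow> 0\<^sub>m nr nc *\<^sub>v c = 0\<^sub>v nr"
  by (intro eq_vecI) (auto simp: mult_mat_vec_def)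

lemma mat_mult_zero_vec[simp]: "(A :: real mat) \<in> carrier_mat nr nc \<Longrightarrow> A *\<^sub>v 0\<^sub>v nc = 0\<^sub>v nr"
  by (intro eq_vecI) (auto simp: mult_mat_vec_def)

lemma rb_orth_vec:
  fixes Q :: "real mat"
  assumes Q: "Q \<in> carrier_mat l l" "Q * transpose_mat Q = 1\<^sub>m l"
    and k1: "o1 + k1 \<le> l" and k2: "o2 + k2 \<le> l" and c: "c \<in> carrier_vec k2"
  shows "o1 = o2 \<Longrightarrow> k1 = k2 \<Longrightarrow> row_block Q o1 k1 *\<^sub>v (transpose_mat (row_block Q o2 k2) *\<^sub>v c) = c"
    and "o1 + k1 \<le> o2 \<or> o2 + k2 \<le> o1 \<Longrightarrow> row_block Q o1 k1 *\<^sub>v (transpose_mat (row_block Q o2 k2) *\<^sub>v c) = 0\<^sub>v k1"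
proof -
  have cQ: "row_block Q o1 k1 \<in> carrier_mat k1 l" "transpose_mat (row_block Q o2 k2) \<in> carrier_mat l k2"
    using Q by auto
  have e: "row_block Q o1 k1 *\<^sub>v (transpose_mat (row_block Q o2 k2) *\<^sub>v c)
     = mat k1 k2 (\<lambda>(i,j). if i + o1 = j + o2 then 1 else 0) *\<^sub>v c"
    using rb_orth[OF Q k1 k2] cQ c by (metis assoc_mult_mat_vec)
  show "o1 = o2 \<Longrightarrow> k1 = k2 \<Longrightarrow> row_block Q o1 k1 *\<^sub>v (transpose_mat (row_block Q o2 k2) *\<^sub>v c) = c"
  proof -
    assume "o1 = o2" "k1 = k2"
    then have "mat k1 k2 (\<lambda>(i,j). if i + o1 = j + o2 then (1::real) else 0) = 1\<^sub>m k2"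
      by (intro eq_matI) auto
    then show ?thesis using e c by simp
  qed
  show "o1 + k1 \<le> o2 \<or> o2 + k2 \<le> o1 \<Longrightarrow> row_block Q o1 k1 *\<^sub>v (transpose_mat (row_block Q o2 k2) *\<^sub>v c) = 0\<^sub>v k1"
  proof -
    assume h: "o1 + k1 \<le> o2 \<or> o2 + k2 \<le> o1"
    then have "mat k1 k2 (\<lambda>(i,j). if i + o1 = j + o2 then (1::real) else 0) = 0\<^sub>m k1 k2"
      by (intro eq_matI) auto
    then show ?thesis using e c by simp
  qed
qed

lemma sel_vec:
  fixes b1 b2 :: "real vec"
  assumes b1: "b1 \<in> carrier_vec n1" and b2: "b2 \<in> carrier_vec n2"
  shows "mat n1 (n1 + n2) (\<lambda>(i,j). if j = i then 1 else 0) *\<^sub>v (b1 @\<^sub>v b2) = b1"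
    and "mat n2 (n1 + n2) (\<lambda>(i,j). if j = n1 + i then 1 else 0) *\<^sub>v (b1 @\<^sub>v b2) = b2"
proof -
  show "mat n1 (n1 + n2) (\<lambda>(i,j). if j = i then 1 else 0) *\<^sub>v (b1 @\<^sub>v b2) = b1"
  proof (rule eq_vecI)
    fix i assume "i < dim_vec b1"
    then have i: "i < n1" using b1 by simp
    have "row (mat n1 (n1 + n2) (\<lambda>(i,j). if j = i then (1::real) else 0)) i = unit_vec (n1 + n2) i"
      using i by (intro eq_vecI) (auto simp: unit_vec_def)
    then show "(mat n1 (n1 + n2) (\<lambda>(i,j). if j = i then 1 else 0) *\<^sub>v (b1 @\<^sub>v b2)) $ i = b1 $ i"
      using i b1 b2 by (simp add: mult_mat_vec_def)
  qed (use b1 in auto)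
  show "mat n2 (n1 + n2) (\<lambda>(i,j). if j = n1 + i then 1 else 0) *\<^sub>v (b1 @\<^sub>v b2) = b2"
  proof (rule eq_vecI)
    fix i assume "i < dim_vec b2"
    then have i: "i < n2" using b2 by simp
    have "row (mat n2 (n1 + n2) (\<lambda>(i,j). if j = n1 + i then (1::real) else 0)) i = unit_vec (n1 + n2) (n1 + i)"
      using i by (intro eq_vecI) (auto simp: unit_vec_def)
    then show "(mat n2 (n1 + n2) (\<lambda>(i,j). if j = n1 + i then 1 else 0) *\<^sub>v (b1 @\<^sub>v b2)) $ i = b2 $ i"
      using i b1 b2 by (simp add: mult_mat_vec_def)
  qed (use b2 in auto)
qed

lemma vec_minus_zero_eq:
  fixes a b :: "real vec"
  assumes a: "a \<in> carrier_vec n" and b: "b \<in> carrier_vec n" and h: "a - b = 0\<^sub>v n"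
  shows "a = b"
proof (rule eq_vecI)
  fix i assume i: "i < dim_vec b"
  have "(a - b) $ i = 0" using h i b by simp
  then show "a $ i = b $ i" using i a b by simp
qed (use a b in auto)

lemma vec_minus_self:
  fixes a :: "real vec"
  assumes a: "a \<in> carrier_vec n"
  shows "a - a = 0\<^sub>v n"
  by (intro eq_vecI) (use a in auto)

lemma vec_add_minus_cancel:
  fixes a b :: "real vec"
  assumes a: "a \<in> carrier_vec n" and b: "b \<in> carrier_vec n"
  shows "a + (b - a) = b"
  by (intro eq_vecI) (use a b in auto)

theorem proposition6:
  fixes m p Np Nf l :: nat
    and Wp Uf Yf :: "real mat"
    and L11 L21 L22 L31 L32 L33 Q :: "real mat"
    and J :: "real vec \<Rightarrow> real vec \<Rightarrow> real vec \<Rightarrow> real"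
    and Uc Yc :: "real vec set"
    and lambda_a :: real
  defines "nw \<equiv> Np * (m + p)" and "nu \<equiv> m * Nf" and "ny \<equiv> p * Nf"
  defines "D \<equiv> Wp @\<^sub>r Uf @\<^sub>r Yf"
    and "Z \<equiv> Wp @\<^sub>r Uf"
  defines "Proj \<equiv> pinv Z * Z"
  defines "PiPerp \<equiv> 1\<^sub>m l - Proj"
  defines "Q1 \<equiv> row_block Q 0 nw" and "Q2 \<equiv> row_block Q nw nu" and "Q3 \<equiv> row_block Q (nw + nu) ny"
  defines "R_reg \<equiv> minv (Uf * (1\<^sub>m l - pinv Wp * Wp) * transpose_mat Uf)"
  assumes Wp: "Wp \<in> carrier_mat nw l" and Uf: "Uf \<in> carrier_mat nu l" and Yf: "Yf \<in> carrier_mat ny l"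
    and rank: "full_row_rank D"
    and Q: "Q \<in> carrier_mat l l" "Q * transpose_mat Q = 1\<^sub>m l" "nw + nu + ny \<le> l"
    and L11: "L11 \<in> carrier_mat nw nw" "invertible_mat L11"
    and L22: "L22 \<in> carrier_mat nu nu" "invertible_mat L22"
    and L33: "L33 \<in> carrier_mat ny ny" "invertible_mat L33"
    and L21: "L21 \<in> carrier_mat nu nw"
    and L31: "L31 \<in> carrier_mat ny nw" and L32: "L32 \<in> carrier_mat ny nu"
    and LQ: "Wp = L11 * Q1" "Uf = L21 * Q1 + L22 * Q2" "Yf = L31 * Q1 + L32 * Q2 + L33 * Q3"
    and lam: "lambda_a > 0"
  shows "\<forall>xi \<in> carrier_vec nw.
     gamma_ddpc_opt L11 L21 L22 L31 L32 L33 J Uc Yc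
        (\<lambda>g1 g2 g3. lambda_a * sqnorm g2) (\<lambda>g2 g3. g3 = 0\<^sub>v ny) xi
     = deepc_opt Wp Uf Yf J Uc Yc (\<lambda>a. lambda_a * sqnorm (Proj *\<^sub>v a)) (\<lambda>a. PiPerp *\<^sub>v a = 0\<^sub>v l) xi
   \<and> gamma_ddpc_opt L11 L21 L22 L31 L32 L33 J Uc Yc
        (\<lambda>g1 g2 g3. lambda_a * sqnorm g2) (\<lambda>g2 g3. g3 = 0\<^sub>v ny) xi
     = deepc_opt Wp Uf Yf J Uc Yc (\<lambda>a. lambda_a * sqnorm a) (\<lambda>a. PiPerp *\<^sub>v a = 0\<^sub>v l) xi
   \<and> gamma_ddpc_opt L11 L21 L22 L31 L32 L33 J Uc Yc
        (\<lambda>g1 g2 g3. lambda_a * sqnorm g2) (\<lambda>g2 g3. g3 = 0\<^sub>v ny) xi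
     = spc_opt Wp Uf Yf J Uc Yc
        (\<lambda>xi' u y. lambda_a * wsqnorm R_reg (u - Uf * pinv Wp *\<^sub>v xi')) xi
   \<and> deepc_opt Wp Uf Yf J Uc Yc (\<lambda>a. lambda_a * sqnorm (Proj *\<^sub>v a)) (\<lambda>a. PiPerp *\<^sub>v a = 0\<^sub>v l) xi
     = spc_opt Wp Uf Yf J Uc Yc
        (\<lambda>xi' u y. lambda_a * wsqnorm R_reg (u - Uf * pinv Wp *\<^sub>v xi')) xi"
proof -
  obtain L11i where L11i: "L11i \<in> carrier_mat nw nw" "L11 * L11i = 1\<^sub>m nw" "L11i * L11 = 1\<^sub>m nw"
    using invertible_obtain[OF L11] by blast
  obtain L22i where L22i: "L22i \<in> carrier_mat nu nu" "L22 * L22i = 1\<^sub>m nu" "L22i * L22 = 1\<^sub>m nu"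
    using invertible_obtain[OF L22] by blast
  define T1 where "T1 = transpose_mat Q1"
  define T2 where "T2 = transpose_mat Q2"
  define T3 where "T3 = transpose_mat Q3"
  have Q1c: "Q1 \<in> carrier_mat nw l" and Q2c: "Q2 \<in> carrier_mat nu l" and Q3c: "Q3 \<in> carrier_mat ny l"
    unfolding Q1_def Q2_def Q3_def using Q(1) by (auto simp: row_block_def)
  have T1c: "T1 \<in> carrier_mat l nw" and T2c: "T2 \<in> carrier_mat l nu" and T3c: "T3 \<in> carrier_mat l ny"
    unfolding T1_def T2_def T3_def using Q1c Q2c Q3c by auto
  note cs = Wp Uf Yf L11(1) L22(1) L33(1) L21 L31 L32 L11i(1) L22i(1) Q1c Q2c Q3c T1c T2c T3c
  have l1: "0 + nw \<le> l" and l2: "nw + nu \<le> l" and l3: "nw + nu + ny \<le> l" using Q(3) by auto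
  have O11: "\<And>c. c \<in> carrier_vec nw \<Longrightarrow> Q1 *\<^sub>v (T1 *\<^sub>v c) = c"
    unfolding T1_def T2_def T3_def Q1_def Q2_def Q3_def using rb_orth_vec(1)[OF Q(1,2) l1 l1] by simp
  have O22: "\<And>c. c \<in> carrier_vec nu \<Longrightarrow> Q2 *\<^sub>v (T2 *\<^sub>v c) = c"
    unfolding T1_def T2_def T3_def Q1_def Q2_def Q3_def using rb_orth_vec(1)[OF Q(1,2) l2 l2] by simp
  have O33: "\<And>c. c \<in> carrier_vec ny \<Longrightarrow> Q3 *\<^sub>v (T3 *\<^sub>v c) = c"
    unfolding T1_def T2_def T3_def Q1_def Q2_def Q3_def using rb_orth_vec(1)[OF Q(1,2) l3 l3] by simp
  have O12: "\<And>c. c \<in> carrier_vec nu \<Longrightarrow> Q1 *\<^sub>v (T2 *\<^sub>v c) = 0\<^sub>v nw"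
    unfolding T1_def T2_def T3_def Q1_def Q2_def Q3_def using rb_orth_vec(2)[OF Q(1,2) l1 l2] by simp
  have O21: "\<And>c. c \<in> carrier_vec nw \<Longrightarrow> Q2 *\<^sub>v (T1 *\<^sub>v c) = 0\<^sub>v nu"
    unfolding T1_def T2_def T3_def Q1_def Q2_def Q3_def using rb_orth_vec(2)[OF Q(1,2) l2 l1] by simp
  have O31: "\<And>c. c \<in> carrier_vec nw \<Longrightarrow> Q3 *\<^sub>v (T1 *\<^sub>v c) = 0\<^sub>v ny"
    unfolding T1_def T2_def T3_def Q1_def Q2_def Q3_def using rb_orth_vec(2)[OF Q(1,2) l3 l1] by simp
  have O32: "\<And>c. c \<in> carrier_vec nu \<Longrightarrow> Q3 *\<^sub>v (T2 *\<^sub>v c) = 0\<^sub>v ny"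
    unfolding T1_def T2_def T3_def Q1_def Q2_def Q3_def using rb_orth_vec(2)[OF Q(1,2) l3 l2] by simp
  have WA: "\<And>a. a \<in> carrier_vec l \<Longrightarrow> Wp *\<^sub>v a = L11 *\<^sub>v (Q1 *\<^sub>v a)"
    unfolding LQ(1) by (rule assoc_mult_mat_vec[OF L11(1) Q1c])
  have UA: "\<And>a. a \<in> carrier_vec l \<Longrightarrow> Uf *\<^sub>v a = L21 *\<^sub>v (Q1 *\<^sub>v a) + L22 *\<^sub>v (Q2 *\<^sub>v a)"
  proof -
    fix a :: "real vec" assume a: "a \<in> carrier_vec l"
    have "Uf *\<^sub>v a = (L21 * Q1) *\<^sub>v a + (L22 * Q2) *\<^sub>v a"
      unfolding LQ(2) by (rule add_mult_distrib_mat_vec[OF mult_carrier_mat[OF L21 Q1c] mult_carrier_mat[OF L22(1) Q2c] a])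
    then show "Uf *\<^sub>v a = L21 *\<^sub>v (Q1 *\<^sub>v a) + L22 *\<^sub>v (Q2 *\<^sub>v a)"
      using assoc_mult_mat_vec[OF L21 Q1c a] assoc_mult_mat_vec[OF L22(1) Q2c a] by simp
  qed
  have YA: "\<And>a. a \<in> carrier_vec l \<Longrightarrow> Yf *\<^sub>v a = L31 *\<^sub>v (Q1 *\<^sub>v a) + L32 *\<^sub>v (Q2 *\<^sub>v a) + L33 *\<^sub>v (Q3 *\<^sub>v a)"
  proof -
    fix a :: "real vec" assume a: "a \<in> carrier_vec l"
    have "Yf *\<^sub>v a = (L31 * Q1 + L32 * Q2) *\<^sub>v a + (L33 * Q3) *\<^sub>v a"
      unfolding LQ(3) by (rule add_mult_distrib_mat_vec[OF add_carrier_mat[OF mult_carrier_mat[OF L32 Q2c]] mult_carrier_mat[OF L33(1) Q3c] a])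
    also have "(L31 * Q1 + L32 * Q2) *\<^sub>v a = (L31 * Q1) *\<^sub>v a + (L32 * Q2) *\<^sub>v a"
      by (rule add_mult_distrib_mat_vec[OF mult_carrier_mat[OF L31 Q1c] mult_carrier_mat[OF L32 Q2c] a])
    finally show "Yf *\<^sub>v a = L31 *\<^sub>v (Q1 *\<^sub>v a) + L32 *\<^sub>v (Q2 *\<^sub>v a) + L33 *\<^sub>v (Q3 *\<^sub>v a)"
      using assoc_mult_mat_vec[OF L31 Q1c a] assoc_mult_mat_vec[OF L32 Q2c a] assoc_mult_mat_vec[OF L33(1) Q3c a] by simp
  qed
  define emb where "emb = (\<lambda>c1 c2. T1 *\<^sub>v c1 + T2 *\<^sub>v c2)"
  have embc: "\<And>c1 c2. emb c1 c2 \<in> carrier_vec l" unfolding emb_def carrier_vec_def using cs by simp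
  have E1: "\<And>c1 c2. c1 \<in> carrier_vec nw \<Longrightarrow> c2 \<in> carrier_vec nu \<Longrightarrow> Q1 *\<^sub>v emb c1 c2 = c1"
    unfolding emb_def using cs O11 O12 by (simp add: mult_add_distrib_mat_vec[of _ nw l])
  have E2: "\<And>c1 c2. c1 \<in> carrier_vec nw \<Longrightarrow> c2 \<in> carrier_vec nu \<Longrightarrow> Q2 *\<^sub>v emb c1 c2 = c2"
    unfolding emb_def using cs O22 O21 by (simp add: mult_add_distrib_mat_vec[of _ nu l])
  have E3: "\<And>c1 c2. c1 \<in> carrier_vec nw \<Longrightarrow> c2 \<in> carrier_vec nu \<Longrightarrow> Q3 *\<^sub>v emb c1 c2 = 0\<^sub>v ny"
    unfolding emb_def using cs O31 O32 by (simp add: mult_add_distrib_mat_vec[of _ ny l])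
  have I11: "\<And>v. v \<in> carrier_vec nw \<Longrightarrow> L11 *\<^sub>v (L11i *\<^sub>v v) = v"
    using assoc_mult_mat_vec[of L11 nw nw L11i nw, symmetric] L11i(2) cs by simp
  have I11': "\<And>v. v \<in> carrier_vec nw \<Longrightarrow> L11i *\<^sub>v (L11 *\<^sub>v v) = v"
    using assoc_mult_mat_vec[of L11i nw nw L11 nw, symmetric] L11i(3) cs by simp
  have I22: "\<And>v. v \<in> carrier_vec nu \<Longrightarrow> L22 *\<^sub>v (L22i *\<^sub>v v) = v"
    using assoc_mult_mat_vec[of L22 nu nu L22i nu, symmetric] L22i(2) cs by simp
  have I22': "\<And>v. v \<in> carrier_vec nu \<Longrightarrow> L22i *\<^sub>v (L22 *\<^sub>v v) = v"
    using assoc_mult_mat_vec[of L22i nu nu L22 nu, symmetric] L22i(3) cs by simp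
  have EN: "\<And>c1 c2. c1 \<in> carrier_vec nw \<Longrightarrow> c2 \<in> carrier_vec nu \<Longrightarrow> sqnorm (emb c1 c2) = sqnorm c1 + sqnorm c2"
  proof -
    fix c1 c2 :: "real vec" assume c1: "c1 \<in> carrier_vec nw" and c2: "c2 \<in> carrier_vec nu"
    have "sqnorm (emb c1 c2) = (T1 *\<^sub>v c1) \<bullet> emb c1 c2 + (T2 *\<^sub>v c2) \<bullet> emb c1 c2"
      unfolding sqnorm_def by (subst (1) emb_def, rule add_scalar_prod_distrib[of _ l]) (use cs embc c1 c2 in auto)
    also have "(T1 *\<^sub>v c1) \<bullet> emb c1 c2 = c1 \<bullet> (Q1 *\<^sub>v emb c1 c2)"
      unfolding T1_def by (rule transpose_vec_mult_scalar[of _ nw l]) (use cs embc c1 in auto)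
    also have "(T2 *\<^sub>v c2) \<bullet> emb c1 c2 = c2 \<bullet> (Q2 *\<^sub>v emb c1 c2)"
      unfolding T2_def by (rule transpose_vec_mult_scalar[of _ nu l]) (use cs embc c2 in auto)
    finally show "sqnorm (emb c1 c2) = sqnorm c1 + sqnorm c2" using E1 E2 c1 c2 by (simp add: sqnorm_def)
  qed
  have EW: "\<And>c1 c2. c1 \<in> carrier_vec nw \<Longrightarrow> c2 \<in> carrier_vec nu \<Longrightarrow> Wp *\<^sub>v emb c1 c2 = L11 *\<^sub>v c1"
    using WA E1 embc by simp
  have EU: "\<And>c1 c2. c1 \<in> carrier_vec nw \<Longrightarrow> c2 \<in> carrier_vec nu \<Longrightarrow> Uf *\<^sub>v emb c1 c2 = L21 *\<^sub>v c1 + L22 *\<^sub>v c2"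
    using UA E1 E2 embc by simp
  have EY: "\<And>c1 c2. c1 \<in> carrier_vec nw \<Longrightarrow> c2 \<in> carrier_vec nu \<Longrightarrow> Yf *\<^sub>v emb c1 c2 = L31 *\<^sub>v c1 + L32 *\<^sub>v c2"
  proof -
    fix c1 c2 :: "real vec" assume c1: "c1 \<in> carrier_vec nw" and c2: "c2 \<in> carrier_vec nu"
    have "Yf *\<^sub>v emb c1 c2 = L31 *\<^sub>v c1 + L32 *\<^sub>v c2 + L33 *\<^sub>v 0\<^sub>v ny"
      using YA E1 E2 E3 embc c1 c2 by simp
    also have "\<dots> = L31 *\<^sub>v c1 + L32 *\<^sub>v c2" using cs c1 c2 by simp
    finally show "Yf *\<^sub>v emb c1 c2 = L31 *\<^sub>v c1 + L32 *\<^sub>v c2" .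
  qed
  define P12 where "P12 = T1 * Q1 + T2 * Q2"
  have P12c: "P12 \<in> carrier_mat l l" unfolding P12_def using cs by auto
  have P12a: "\<And>a. a \<in> carrier_vec l \<Longrightarrow> P12 *\<^sub>v a = emb (Q1 *\<^sub>v a) (Q2 *\<^sub>v a)"
  proof -
    fix a :: "real vec" assume a: "a \<in> carrier_vec l"
    have "P12 *\<^sub>v a = (T1 * Q1) *\<^sub>v a + (T2 * Q2) *\<^sub>v a"
      unfolding P12_def using cs a by (intro add_mult_distrib_mat_vec) auto
    then show "P12 *\<^sub>v a = emb (Q1 *\<^sub>v a) (Q2 *\<^sub>v a)" unfolding emb_def using cs a by simp
  qed
  have P12s: "transpose_mat P12 = P12"
  proof -
    have "transpose_mat P12 = transpose_mat (T1 * Q1) + transpose_mat (T2 * Q2)"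
      unfolding P12_def using cs by (intro transpose_add) auto
    also have "transpose_mat (T1 * Q1) = T1 * Q1" unfolding T1_def using cs by (subst transpose_mult) auto
    also have "transpose_mat (T2 * Q2) = T2 * Q2" unfolding T2_def using cs by (subst transpose_mult) auto
    finally show ?thesis unfolding P12_def .
  qed
  define S1 :: "real mat" where "S1 = mat nw (nw + nu) (\<lambda>(i,j). if j = i then 1 else 0)"
  define S2 :: "real mat" where "S2 = mat nu (nw + nu) (\<lambda>(i,j). if j = nw + i then 1 else 0)"
  have S1c: "S1 \<in> carrier_mat nw (nw + nu)" and S2c: "S2 \<in> carrier_mat nu (nw + nu)"
    unfolding S1_def S2_def by auto
  define R0 where "R0 = T1 * L11i * S1 + T2 * (L22i * (S2 - L21 * (L11i * S1)))"
  have c1: "T1 * L11i * S1 \<in> carrier_mat l (nw + nu)" using T1c L11i(1) S1c by auto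
  have c2: "L11i * S1 \<in> carrier_mat nw (nw + nu)" using L11i(1) S1c by auto
  have c3: "L21 * (L11i * S1) \<in> carrier_mat nu (nw + nu)" using L21 c2 by auto
  have c4: "S2 - L21 * (L11i * S1) \<in> carrier_mat nu (nw + nu)" using minus_carrier_mat[OF c3] by auto
  have c5: "L22i * (S2 - L21 * (L11i * S1)) \<in> carrier_mat nu (nw + nu)" using L22i(1) c4 by auto
  have c6: "T2 * (L22i * (S2 - L21 * (L11i * S1))) \<in> carrier_mat l (nw + nu)" using T2c c5 by auto
  have R0c: "R0 \<in> carrier_mat l (nw + nu)" unfolding R0_def using c1 c6 by auto
  have R0b: "\<And>b1 b2. b1 \<in> carrier_vec nw \<Longrightarrow> b2 \<in> carrier_vec nu \<Longrightarrow>
     R0 *\<^sub>v (b1 @\<^sub>v b2) = emb (L11i *\<^sub>v b1) (L22i *\<^sub>v (b2 - L21 *\<^sub>v (L11i *\<^sub>v b1)))"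
  proof -
    fix b1 b2 :: "real vec" assume b1: "b1 \<in> carrier_vec nw" and b2: "b2 \<in> carrier_vec nu"
    have b: "b1 @\<^sub>v b2 \<in> carrier_vec (nw + nu)" using b1 b2 by auto
    have s1: "S1 *\<^sub>v (b1 @\<^sub>v b2) = b1" unfolding S1_def by (rule sel_vec(1)[OF b1 b2])
    have s2: "S2 *\<^sub>v (b1 @\<^sub>v b2) = b2" unfolding S2_def by (rule sel_vec(2)[OF b1 b2])
    have "R0 *\<^sub>v (b1 @\<^sub>v b2) = (T1 * L11i * S1) *\<^sub>v (b1 @\<^sub>v b2) + (T2 * (L22i * (S2 - L21 * (L11i * S1)))) *\<^sub>v (b1 @\<^sub>v b2)"
      unfolding R0_def by (rule add_mult_distrib_mat_vec[OF c1 c6 b])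
    also have "(T1 * L11i * S1) *\<^sub>v (b1 @\<^sub>v b2) = T1 *\<^sub>v (L11i *\<^sub>v b1)"
      using assoc_mult_mat_vec[OF mult_carrier_mat[OF T1c L11i(1)] S1c b] assoc_mult_mat_vec[OF T1c L11i(1) b1] s1 by simp
    also have "(T2 * (L22i * (S2 - L21 * (L11i * S1)))) *\<^sub>v (b1 @\<^sub>v b2)
       = T2 *\<^sub>v (L22i *\<^sub>v ((S2 - L21 * (L11i * S1)) *\<^sub>v (b1 @\<^sub>v b2)))"
      using assoc_mult_mat_vec[OF T2c c5 b] assoc_mult_mat_vec[OF L22i(1) c4 b] by simp
    also have "(S2 - L21 * (L11i * S1)) *\<^sub>v (b1 @\<^sub>v b2) = b2 - L21 *\<^sub>v (L11i *\<^sub>v b1)"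
      using minus_mult_distrib_mat_vec[OF S2c c3 b] assoc_mult_mat_vec[OF L21 c2 b] assoc_mult_mat_vec[OF L11i(1) S1c b] s1 s2
      by simp
    finally show "R0 *\<^sub>v (b1 @\<^sub>v b2) = emb (L11i *\<^sub>v b1) (L22i *\<^sub>v (b2 - L21 *\<^sub>v (L11i *\<^sub>v b1)))"
      unfolding emb_def .
  qed
  have Zc: "Z \<in> carrier_mat (nw + nu) l" unfolding Z_def using Wp Uf by auto
  have Za: "\<And>a. a \<in> carrier_vec l \<Longrightarrow> Z *\<^sub>v a = (Wp *\<^sub>v a) @\<^sub>v (Uf *\<^sub>v a)"
    unfolding Z_def by (rule mat_mult_append[OF Wp Uf])
  have ZR0: "Z * R0 = 1\<^sub>m (nw + nu)"
  proof (rule mat_eq_vecI)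
    show "Z * R0 \<in> carrier_mat (nw + nu) (nw + nu)" using Zc R0c by auto
    show "1\<^sub>m (nw + nu) \<in> carrier_mat (nw + nu) (nw + nu)" by auto
    fix b :: "real vec" assume b: "b \<in> carrier_vec (nw + nu)"
    define b1 where "b1 = vec_first b nw"
    define b2 where "b2 = vec_last b nu"
    have b1: "b1 \<in> carrier_vec nw" and b2: "b2 \<in> carrier_vec nu" unfolding b1_def b2_def by auto
    have bb: "b = b1 @\<^sub>v b2" unfolding b1_def b2_def using b by simp
    define g where "g = L11i *\<^sub>v b1"
    have g: "g \<in> carrier_vec nw" unfolding g_def using L11i(1) b1 by auto
    define h where "h = L22i *\<^sub>v (b2 - L21 *\<^sub>v g)"
    have h: "h \<in> carrier_vec nu" unfolding h_def using L22i(1) L21 b2 g by auto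
    have "(Z * R0) *\<^sub>v b = Z *\<^sub>v (R0 *\<^sub>v b)" using Zc R0c b by simp
    also have "R0 *\<^sub>v b = emb g h" unfolding bb g_def h_def by (rule R0b[OF b1 b2])
    also have "Z *\<^sub>v emb g h = (L11 *\<^sub>v g) @\<^sub>v (L21 *\<^sub>v g + L22 *\<^sub>v h)"
      using Za[OF embc] EW[OF g h] EU[OF g h] by simp
    also have "L11 *\<^sub>v g = b1" unfolding g_def by (rule I11[OF b1])
    also have "L22 *\<^sub>v h = b2 - L21 *\<^sub>v g" unfolding h_def 
      by (rule I22) (use b2 L21 g in auto)
    also have "L21 *\<^sub>v g + (b2 - L21 *\<^sub>v g) = b2"
      by (intro eq_vecI) (use b2 L21 g in auto)
    finally show "(Z * R0) *\<^sub>v b = 1\<^sub>m (nw + nu) *\<^sub>v b" using bb b by simp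
  qed
  have R0Z: "R0 * Z = P12"
  proof (rule mat_eq_vecI)
    show "R0 * Z \<in> carrier_mat l l" using Zc R0c by auto
    show "P12 \<in> carrier_mat l l" by (rule P12c)
    fix a :: "real vec" assume a: "a \<in> carrier_vec l"
    have qa: "Q1 *\<^sub>v a \<in> carrier_vec nw" "Q2 *\<^sub>v a \<in> carrier_vec nu" using Q1c Q2c a by auto
    have "(R0 * Z) *\<^sub>v a = R0 *\<^sub>v (Z *\<^sub>v a)" using Zc R0c a by simp
    also have "\<dots> = R0 *\<^sub>v ((L11 *\<^sub>v (Q1 *\<^sub>v a)) @\<^sub>v (L21 *\<^sub>v (Q1 *\<^sub>v a) + L22 *\<^sub>v (Q2 *\<^sub>v a)))"
      using Za[OF a] WA[OF a] UA[OF a] by simp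
    also have "\<dots> = emb (Q1 *\<^sub>v a) (Q2 *\<^sub>v a)"
    proof -
      have x: "L11i *\<^sub>v (L11 *\<^sub>v (Q1 *\<^sub>v a)) = Q1 *\<^sub>v a" by (rule I11'[OF qa(1)])
      have y: "L21 *\<^sub>v (Q1 *\<^sub>v a) + L22 *\<^sub>v (Q2 *\<^sub>v a) - L21 *\<^sub>v (Q1 *\<^sub>v a) = L22 *\<^sub>v (Q2 *\<^sub>v a)"
        by (intro eq_vecI) (use L21 L22(1) qa in auto)
      show ?thesis
        by (subst R0b) (use L11(1) L21 L22(1) qa x y I22'[OF qa(2)] in auto)
    qed
    also have "\<dots> = P12 *\<^sub>v a" using P12a[OF a] by simp
    finally show "(R0 * Z) *\<^sub>v a = P12 *\<^sub>v a" .
  qed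
  have pinvZ: "pinv Z = R0" by (rule pinv_eq[OF Zc R0c ZR0]) (use R0Z P12s in simp)
  have Proj: "Proj = P12" unfolding Proj_def pinvZ R0Z ..
  have T1L: "T1 * L11i \<in> carrier_mat l nw" using T1c L11i(1) by auto
  have WT: "Wp * (T1 * L11i) = 1\<^sub>m nw"
  proof (rule mat_eq_vecI)
    show "Wp * (T1 * L11i) \<in> carrier_mat nw nw" using Wp T1L by auto
    show "1\<^sub>m nw \<in> carrier_mat nw nw" by auto
    fix v :: "real vec" assume v: "v \<in> carrier_vec nw"
    have lv: "L11i *\<^sub>v v \<in> carrier_vec nw" using L11i(1) v by auto
    have "(Wp * (T1 * L11i)) *\<^sub>v v = Wp *\<^sub>v (T1 *\<^sub>v (L11i *\<^sub>v v))"
      using assoc_mult_mat_vec[OF Wp T1L v] assoc_mult_mat_vec[OF T1c L11i(1) v] by simp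
    also have "\<dots> = L11 *\<^sub>v (Q1 *\<^sub>v (T1 *\<^sub>v (L11i *\<^sub>v v)))" using WA T1c lv by auto
    also have "\<dots> = v" using O11[OF lv] I11[OF v] by simp
    finally show "(Wp * (T1 * L11i)) *\<^sub>v v = 1\<^sub>m nw *\<^sub>v v" using v by simp
  qed
  have TW: "(T1 * L11i) * Wp = T1 * Q1"
  proof (rule mat_eq_vecI)
    show "(T1 * L11i) * Wp \<in> carrier_mat l l" using Wp T1L by auto
    show "T1 * Q1 \<in> carrier_mat l l" using T1c Q1c by auto
    fix a :: "real vec" assume a: "a \<in> carrier_vec l"
    have qa: "Q1 *\<^sub>v a \<in> carrier_vec nw" using Q1c a by auto
    have "((T1 * L11i) * Wp) *\<^sub>v a = T1 *\<^sub>v (L11i *\<^sub>v (Wp *\<^sub>v a))"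
      using assoc_mult_mat_vec[OF T1L Wp a] assoc_mult_mat_vec[OF T1c L11i(1) mult_mat_vec_carrier[OF Wp a]] by simp
    also have "\<dots> = T1 *\<^sub>v (Q1 *\<^sub>v a)" using WA[OF a] I11'[OF qa] by simp
    finally show "((T1 * L11i) * Wp) *\<^sub>v a = (T1 * Q1) *\<^sub>v a" using assoc_mult_mat_vec[OF T1c Q1c a] by simp
  qed
  have T1Q1s: "transpose_mat (T1 * Q1) = T1 * Q1" unfolding T1_def using Q1c by (subst transpose_mult) auto
  have pinvW: "pinv Wp = T1 * L11i" by (rule pinv_eq[OF Wp T1L WT]) (use TW T1Q1s in simp)
  have PW: "pinv Wp * Wp = T1 * Q1" using pinvW TW by simp
  have UfT: "transpose_mat Uf = T1 * transpose_mat L21 + T2 * transpose_mat L22"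
  proof -
    have "transpose_mat Uf = transpose_mat (L21 * Q1) + transpose_mat (L22 * Q2)"
      unfolding LQ(2) by (rule transpose_add[OF mult_carrier_mat[OF L21 Q1c] mult_carrier_mat[OF L22(1) Q2c]])
    also have "transpose_mat (L21 * Q1) = T1 * transpose_mat L21" unfolding T1_def by (rule transpose_mult[OF L21 Q1c])
    also have "transpose_mat (L22 * Q2) = T2 * transpose_mat L22" unfolding T2_def by (rule transpose_mult[OF L22(1) Q2c])
    finally show ?thesis .
  qed
  have L21T: "transpose_mat L21 \<in> carrier_mat nw nu" and L22T: "transpose_mat L22 \<in> carrier_mat nu nu"
    and UfTc: "transpose_mat Uf \<in> carrier_mat l nu" using L21 L22(1) Uf by auto
  have IQ: "1\<^sub>m l - T1 * Q1 \<in> carrier_mat l l" using T1c Q1c by auto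
  have Mreg: "Uf * (1\<^sub>m l - pinv Wp * Wp) * transpose_mat Uf = L22 * transpose_mat L22"
    unfolding PW
  proof (rule mat_eq_vecI)
    show "Uf * (1\<^sub>m l - T1 * Q1) * transpose_mat Uf \<in> carrier_mat nu nu" using Uf IQ UfTc by auto
    show "L22 * transpose_mat L22 \<in> carrier_mat nu nu" using L22(1) by auto
    fix v :: "real vec" assume v: "v \<in> carrier_vec nu"
    define c1 where "c1 = transpose_mat L21 *\<^sub>v v"
    define c2 where "c2 = transpose_mat L22 *\<^sub>v v"
    have c1: "c1 \<in> carrier_vec nw" and c2: "c2 \<in> carrier_vec nu" unfolding c1_def c2_def using L21T L22T v by auto
    have "(Uf * (1\<^sub>m l - T1 * Q1) * transpose_mat Uf) *\<^sub>v v = Uf *\<^sub>v ((1\<^sub>m l - T1 * Q1) *\<^sub>v (transpose_mat Uf *\<^sub>v v))"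
      using assoc_mult_mat_vec[OF mult_carrier_mat[OF Uf IQ] UfTc v] assoc_mult_mat_vec[OF Uf IQ mult_mat_vec_carrier[OF UfTc v]] by simp
    also have "transpose_mat Uf *\<^sub>v v = emb c1 c2"
      unfolding UfT emb_def c1_def c2_def
      using add_mult_distrib_mat_vec[OF mult_carrier_mat[OF T1c L21T] mult_carrier_mat[OF T2c L22T] v]
        assoc_mult_mat_vec[OF T1c L21T v] assoc_mult_mat_vec[OF T2c L22T v] by simp
    also have "(1\<^sub>m l - T1 * Q1) *\<^sub>v emb c1 c2 = emb c1 c2 - T1 *\<^sub>v (Q1 *\<^sub>v emb c1 c2)"
      using minus_mult_distrib_mat_vec[OF one_carrier_mat mult_carrier_mat[OF T1c Q1c] embc]
        assoc_mult_mat_vec[OF T1c Q1c embc] embc by simp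
    also have "\<dots> = T2 *\<^sub>v c2" unfolding E1[OF c1 c2] unfolding emb_def
      by (intro eq_vecI) (use T1c T2c c1 c2 in auto)
    also have "Uf *\<^sub>v (T2 *\<^sub>v c2) = L22 *\<^sub>v c2"
      using UA[OF mult_mat_vec_carrier[OF T2c c2]] O12[OF c2] O22[OF c2] L21 L22(1) c2 by simp
    finally show "(Uf * (1\<^sub>m l - T1 * Q1) * transpose_mat Uf) *\<^sub>v v = (L22 * transpose_mat L22) *\<^sub>v v"
      unfolding c2_def using assoc_mult_mat_vec[OF L22(1) L22T v] by simp
  qed
  have L22iT: "transpose_mat L22i \<in> carrier_mat nu nu" using L22i(1) by auto
  have TL1: "transpose_mat L22 * transpose_mat L22i = 1\<^sub>m nu"
    using transpose_mult[OF L22i(1) L22(1)] L22i(3) by simp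
  have TL2: "transpose_mat L22i * transpose_mat L22 = 1\<^sub>m nu"
    using transpose_mult[OF L22(1) L22i(1)] L22i(2) by simp
  have Rreg: "R_reg = transpose_mat L22i * L22i"
    unfolding R_reg_def Mreg
  proof (rule minv_eq)
    show "L22 * transpose_mat L22 \<in> carrier_mat nu nu" using L22(1) by auto
    show "transpose_mat L22i * L22i \<in> carrier_mat nu nu" using L22i(1) by auto
    have "L22 * transpose_mat L22 * (transpose_mat L22i * L22i) = L22 * (transpose_mat L22 * transpose_mat L22i) * L22i"
      using L22(1) L22T L22iT L22i(1) by (simp add: assoc_mult_mat[of _ nu nu _ nu _ nu])
    then show "L22 * transpose_mat L22 * (transpose_mat L22i * L22i) = 1\<^sub>m nu"
      using TL1 L22i(2) L22(1) by simp
    have "transpose_mat L22i * L22i * (L22 * transpose_mat L22) = transpose_mat L22i * (L22i * L22) * transpose_mat L22"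
      using L22(1) L22T L22iT L22i(1) by (simp add: assoc_mult_mat[of _ nu nu _ nu _ nu])
    then show "transpose_mat L22i * L22i * (L22 * transpose_mat L22) = 1\<^sub>m nu"
      using TL2 L22i(3) L22iT by simp
  qed
  have WS: "\<And>g. g \<in> carrier_vec nu \<Longrightarrow> wsqnorm R_reg (L22 *\<^sub>v g) = sqnorm g"
  proof -
    fix g :: "real vec" assume g: "g \<in> carrier_vec nu"
    have Lg: "L22 *\<^sub>v g \<in> carrier_vec nu" using L22(1) g by auto
    have "R_reg *\<^sub>v (L22 *\<^sub>v g) = transpose_mat L22i *\<^sub>v g"
      unfolding Rreg using assoc_mult_mat_vec[OF L22iT L22i(1) Lg] I22'[OF g] by simp
    then have "wsqnorm R_reg (L22 *\<^sub>v g) = (L22 *\<^sub>v g) \<bullet> (transpose_mat L22i *\<^sub>v g)"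
      unfolding wsqnorm_def by simp
    also have "\<dots> = (transpose_mat L22i *\<^sub>v g) \<bullet> (L22 *\<^sub>v g)"
      by (rule comm_scalar_prod[of _ nu]) (use Lg L22iT g in auto)
    also have "\<dots> = g \<bullet> (L22i *\<^sub>v (L22 *\<^sub>v g))"
      by (rule transpose_vec_mult_scalar[OF L22i(1) Lg g])
    finally show "wsqnorm R_reg (L22 *\<^sub>v g) = sqnorm g" unfolding sqnorm_def using I22'[OF g] by simp
  qed
  have UWx: "\<And>x. x \<in> carrier_vec nw \<Longrightarrow> Uf * pinv Wp *\<^sub>v x = L21 *\<^sub>v (L11i *\<^sub>v x)"
  proof -
    fix x :: "real vec" assume x: "x \<in> carrier_vec nw"
    have gx: "L11i *\<^sub>v x \<in> carrier_vec nw" using L11i(1) x by auto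
    have "Uf * pinv Wp *\<^sub>v x = Uf *\<^sub>v (T1 *\<^sub>v (L11i *\<^sub>v x))"
      unfolding pinvW using assoc_mult_mat_vec[OF Uf T1L x] assoc_mult_mat_vec[OF T1c L11i(1) x] by simp
    also have "\<dots> = L21 *\<^sub>v (L11i *\<^sub>v x) + L22 *\<^sub>v 0\<^sub>v nu"
      using UA[OF mult_mat_vec_carrier[OF T1c gx]] O11[OF gx] O21[OF gx] by simp
    also have "\<dots> = L21 *\<^sub>v (L11i *\<^sub>v x)" using L22(1) L21 gx by simp
    finally show "Uf * pinv Wp *\<^sub>v x = L21 *\<^sub>v (L11i *\<^sub>v x)" .
  qed
  have minvL11: "minv L11 = L11i" by (rule minv_eq[OF L11(1) L11i])
  have PiA: "\<And>a. a \<in> carrier_vec l \<Longrightarrow> PiPerp *\<^sub>v a = a - P12 *\<^sub>v a"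
    unfolding PiPerp_def Proj using minus_mult_distrib_mat_vec[OF one_carrier_mat P12c] by simp
  show ?thesis
  proof
    fix xi :: "real vec" assume xi: "xi \<in> carrier_vec nw"
    define g1 where "g1 = L11i *\<^sub>v xi"
    have g1: "g1 \<in> carrier_vec nw" unfolding g1_def using L11i(1) xi by auto
    define uu where "uu = (\<lambda>g. L21 *\<^sub>v g1 + L22 *\<^sub>v g)"
    define yy where "yy = (\<lambda>g. L31 *\<^sub>v g1 + L32 *\<^sub>v g)"
    define core where "core = opt_traj (\<lambda>g. g \<in> carrier_vec nu \<and> uu g \<in> Uc \<and> yy g \<in> Yc)
       (\<lambda>g. J xi (uu g) (yy g) + lambda_a * sqnorm g) (\<lambda>g. (uu g, yy g))"
    have gam: "gamma_ddpc_opt L11 L21 L22 L31 L32 L33 J Uc Yc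
        (\<lambda>g1 g2 g3. lambda_a * sqnorm g2) (\<lambda>g2 g3. g3 = 0\<^sub>v ny) xi = core"
      unfolding gamma_ddpc_opt_def Let_def minvL11 core_def g1_def[symmetric]
    proof (rule opt_traj_eq[where \<phi>="\<lambda>(u,y,g2,g3). g2" and \<psi>="\<lambda>g. (uu g, yy g, g, 0\<^sub>v ny)" and c=0], goal_cases)
      case (1 z)
      obtain u y g2 g3 where z: "z = (u,y,g2,g3)" by (cases z)
      have f: "g2 \<in> carrier_vec nu" "g3 = 0\<^sub>v ny" "u = uu g2" "y = L31 *\<^sub>v g1 + L32 *\<^sub>v g2 + L33 *\<^sub>v g3" "u \<in> Uc" "y \<in> Yc"
        using 1 L22(1) unfolding z uu_def by auto
      have "y = yy g2" using f L33(1) L31 L32 g1 unfolding yy_def by simp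
      then show ?case unfolding z using f by simp
    next
      case (2 g)
      have g: "g \<in> carrier_vec nu" "uu g \<in> Uc" "yy g \<in> Yc" using 2 by auto
      have "yy g = L31 *\<^sub>v g1 + L32 *\<^sub>v g + L33 *\<^sub>v 0\<^sub>v ny" using L33(1) L31 L32 g1 g unfolding yy_def by simp
      then show ?case using g L22(1) L33(1) unfolding uu_def by auto
    qed
    have d_case1: "\<And>a. a \<in> carrier_vec l \<Longrightarrow> xi = Wp *\<^sub>v a \<Longrightarrow> PiPerp *\<^sub>v a = 0\<^sub>v l \<Longrightarrow>
        Q2 *\<^sub>v a \<in> carrier_vec nu \<and> Uf *\<^sub>v a = uu (Q2 *\<^sub>v a) \<and> Yf *\<^sub>v a = yy (Q2 *\<^sub>v a) \<and>
        sqnorm (Proj *\<^sub>v a) = sqnorm g1 + sqnorm (Q2 *\<^sub>v a) \<and> sqnorm a = sqnorm g1 + sqnorm (Q2 *\<^sub>v a)"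
    proof -
      fix a :: "real vec" assume a: "a \<in> carrier_vec l" and xa: "xi = Wp *\<^sub>v a" and pa: "PiPerp *\<^sub>v a = 0\<^sub>v l"
      have qa: "Q1 *\<^sub>v a \<in> carrier_vec nw" "Q2 *\<^sub>v a \<in> carrier_vec nu" using Q1c Q2c a by auto
      have "a - P12 *\<^sub>v a = 0\<^sub>v l" using PiA[OF a] pa by simp
      then have Pa: "a = P12 *\<^sub>v a" by (rule vec_minus_zero_eq[OF a mult_mat_vec_carrier[OF P12c a]])
      have ae: "a = emb (Q1 *\<^sub>v a) (Q2 *\<^sub>v a)" using Pa P12a[OF a] by simp
      have q1: "Q1 *\<^sub>v a = g1" unfolding g1_def xa WA[OF a] by (rule I11'[OF qa(1), symmetric])
      have "Uf *\<^sub>v a = uu (Q2 *\<^sub>v a)" unfolding uu_def UA[OF a] q1 ..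
      moreover have "Yf *\<^sub>v a = yy (Q2 *\<^sub>v a)" unfolding yy_def using EY[OF qa] ae q1 by simp
      moreover have "sqnorm a = sqnorm g1 + sqnorm (Q2 *\<^sub>v a)" using EN[OF qa] ae q1 by simp
      moreover have "Proj *\<^sub>v a = a" using Pa Proj by simp
      ultimately show "Q2 *\<^sub>v a \<in> carrier_vec nu \<and> Uf *\<^sub>v a = uu (Q2 *\<^sub>v a) \<and> Yf *\<^sub>v a = yy (Q2 *\<^sub>v a) \<and>
        sqnorm (Proj *\<^sub>v a) = sqnorm g1 + sqnorm (Q2 *\<^sub>v a) \<and> sqnorm a = sqnorm g1 + sqnorm (Q2 *\<^sub>v a)"
        using qa by simp
    qed
    have d_case2: "\<And>g. g \<in> carrier_vec nu \<Longrightarrow> emb g1 g \<in> carrier_vec l \<and> xi = Wp *\<^sub>v emb g1 g \<and>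
        Uf *\<^sub>v emb g1 g = uu g \<and> Yf *\<^sub>v emb g1 g = yy g \<and> PiPerp *\<^sub>v emb g1 g = 0\<^sub>v l \<and>
        sqnorm (Proj *\<^sub>v emb g1 g) = sqnorm g1 + sqnorm g \<and> sqnorm (emb g1 g) = sqnorm g1 + sqnorm g"
    proof -
      fix g :: "real vec" assume g: "g \<in> carrier_vec nu"
      have Pe: "P12 *\<^sub>v emb g1 g = emb g1 g" using P12a[OF embc] E1[OF g1 g] E2[OF g1 g] by simp
      have "PiPerp *\<^sub>v emb g1 g = 0\<^sub>v l" using PiA[OF embc] Pe vec_minus_self[OF embc] by simp
      moreover have "xi = Wp *\<^sub>v emb g1 g" using EW[OF g1 g] I11[OF xi] unfolding g1_def by simp
      ultimately show "emb g1 g \<in> carrier_vec l \<and> xi = Wp *\<^sub>v emb g1 g \<and>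
        Uf *\<^sub>v emb g1 g = uu g \<and> Yf *\<^sub>v emb g1 g = yy g \<and> PiPerp *\<^sub>v emb g1 g = 0\<^sub>v l \<and>
        sqnorm (Proj *\<^sub>v emb g1 g) = sqnorm g1 + sqnorm g \<and> sqnorm (emb g1 g) = sqnorm g1 + sqnorm g"
        using embc EU[OF g1 g] EY[OF g1 g] EN[OF g1 g] Pe Proj unfolding uu_def yy_def by simp
    qed
    have dp1: "deepc_opt Wp Uf Yf J Uc Yc (\<lambda>a. lambda_a * sqnorm (Proj *\<^sub>v a)) (\<lambda>a. PiPerp *\<^sub>v a = 0\<^sub>v l) xi = core"
      unfolding deepc_opt_def core_def
    proof (rule opt_traj_eq[where \<phi>="\<lambda>(u,y,a). Q2 *\<^sub>v a" and \<psi>="\<lambda>g. (uu g, yy g, emb g1 g)" and c="lambda_a * sqnorm g1"], goal_cases)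
      case (1 z)
      obtain u y a where z: "z = (u,y,a)" by (cases z)
      have f: "a \<in> carrier_vec l" "xi = Wp *\<^sub>v a" "u = Uf *\<^sub>v a" "y = Yf *\<^sub>v a" "u \<in> Uc" "y \<in> Yc" "PiPerp *\<^sub>v a = 0\<^sub>v l"
        using 1 Wp unfolding z by auto
      show ?case unfolding z using f d_case1[OF f(1,2,7)] by (simp add: algebra_simps)
    next
      case (2 g)
      have g: "g \<in> carrier_vec nu" "uu g \<in> Uc" "yy g \<in> Yc" using 2 by auto
      show ?case using g d_case2[OF g(1)] Wp by (simp add: algebra_simps)
    qed
    have dp2: "deepc_opt Wp Uf Yf J Uc Yc (\<lambda>a. lambda_a * sqnorm a) (\<lambda>a. PiPerp *\<^sub>v a = 0\<^sub>v l) xi = core"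
      unfolding deepc_opt_def core_def
    proof (rule opt_traj_eq[where \<phi>="\<lambda>(u,y,a). Q2 *\<^sub>v a" and \<psi>="\<lambda>g. (uu g, yy g, emb g1 g)" and c="lambda_a * sqnorm g1"], goal_cases)
      case (1 z)
      obtain u y a where z: "z = (u,y,a)" by (cases z)
      have f: "a \<in> carrier_vec l" "xi = Wp *\<^sub>v a" "u = Uf *\<^sub>v a" "y = Yf *\<^sub>v a" "u \<in> Uc" "y \<in> Yc" "PiPerp *\<^sub>v a = 0\<^sub>v l"
        using 1 Wp unfolding z by auto
      show ?case unfolding z using f d_case1[OF f(1,2,7)] by (simp add: algebra_simps)
    next
      case (2 g)
      have g: "g \<in> carrier_vec nu" "uu g \<in> Uc" "yy g \<in> Yc" using 2 by auto
      show ?case using g d_case2[OF g(1)] Wp by (simp add: algebra_simps)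
    qed
    have KX: "\<And>u. u \<in> carrier_vec nu \<Longrightarrow> (Yf * pinv Z) *\<^sub>v (xi @\<^sub>v u) = yy (L22i *\<^sub>v (u - L21 *\<^sub>v g1))"
    proof -
      fix u :: "real vec" assume u: "u \<in> carrier_vec nu"
      have gu: "L22i *\<^sub>v (u - L21 *\<^sub>v g1) \<in> carrier_vec nu" using L22i(1) L21 g1 u by auto
      have "(Yf * pinv Z) *\<^sub>v (xi @\<^sub>v u) = Yf *\<^sub>v (R0 *\<^sub>v (xi @\<^sub>v u))"
        unfolding pinvZ by (rule assoc_mult_mat_vec[OF Yf R0c]) (use xi u in auto)
      also have "R0 *\<^sub>v (xi @\<^sub>v u) = emb g1 (L22i *\<^sub>v (u - L21 *\<^sub>v g1))" unfolding g1_def by (rule R0b[OF xi u])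
      finally show "(Yf * pinv Z) *\<^sub>v (xi @\<^sub>v u) = yy (L22i *\<^sub>v (u - L21 *\<^sub>v g1))"
        using EY[OF g1 gu] unfolding yy_def by simp
    qed
    have spc: "spc_opt Wp Uf Yf J Uc Yc
        (\<lambda>xi' u y. lambda_a * wsqnorm R_reg (u - Uf * pinv Wp *\<^sub>v xi')) xi = core"
      unfolding spc_opt_def Let_def core_def Z_def[symmetric]
    proof (rule opt_traj_eq[where \<phi>="\<lambda>(u,y). L22i *\<^sub>v (u - L21 *\<^sub>v g1)" and \<psi>="\<lambda>g. (uu g, yy g)" and c=0], goal_cases)
      case (1 z)
      obtain u y where z: "z = (u,y)" by (cases z)
      have f: "u \<in> carrier_vec nu" "y = (Yf * pinv Z) *\<^sub>v (xi @\<^sub>v u)" "u \<in> Uc" "y \<in> Yc"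
        using 1 Uf unfolding z by auto
      define g where "g = L22i *\<^sub>v (u - L21 *\<^sub>v g1)"
      have g: "g \<in> carrier_vec nu" unfolding g_def using L22i(1) L21 g1 f(1) by auto
      have Lg: "L22 *\<^sub>v g = u - L21 *\<^sub>v g1" unfolding g_def by (rule I22) (use L21 g1 f(1) in auto)
      have ug: "uu g = u" unfolding uu_def Lg by (rule vec_add_minus_cancel) (use L21 g1 f(1) in auto)
      have "u - Uf * pinv Wp *\<^sub>v xi = L22 *\<^sub>v g" unfolding UWx[OF xi] Lg g1_def ..
      then have "wsqnorm R_reg (u - Uf * pinv Wp *\<^sub>v xi) = sqnorm g" using WS[OF g] by simp
      then show ?case unfolding z using f KX[OF f(1)] ug g unfolding g_def by simp
    next
      case (2 g)
      have g: "g \<in> carrier_vec nu" "uu g \<in> Uc" "yy g \<in> Yc" using 2 by auto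
      have uc: "uu g \<in> carrier_vec nu" unfolding uu_def using L21 L22(1) g1 g by auto
      have e: "uu g - L21 *\<^sub>v g1 = L22 *\<^sub>v g" unfolding uu_def
        by (intro eq_vecI) (use L21 L22(1) g1 g in auto)
      have "L22i *\<^sub>v (uu g - L21 *\<^sub>v g1) = g" unfolding e by (rule I22'[OF g(1)])
      then have y: "(Yf * pinv Z) *\<^sub>v (xi @\<^sub>v uu g) = yy g" using KX[OF uc] by simp
      have "uu g - Uf * pinv Wp *\<^sub>v xi = L22 *\<^sub>v g" unfolding UWx[OF xi] g1_def[symmetric] e ..
      then have "wsqnorm R_reg (uu g - Uf * pinv Wp *\<^sub>v xi) = sqnorm g" using WS[OF g(1)] by simp
      then show ?case using g uc y Uf by simp
    qed
    show "gamma_ddpc_opt L11 L21 L22 L31 L32 L33 J Uc Yc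
        (\<lambda>g1 g2 g3. lambda_a * sqnorm g2) (\<lambda>g2 g3. g3 = 0\<^sub>v ny) xi
     = deepc_opt Wp Uf Yf J Uc Yc (\<lambda>a. lambda_a * sqnorm (Proj *\<^sub>v a)) (\<lambda>a. PiPerp *\<^sub>v a = 0\<^sub>v l) xi
   \<and> gamma_ddpc_opt L11 L21 L22 L31 L32 L33 J Uc Yc
        (\<lambda>g1 g2 g3. lambda_a * sqnorm g2) (\<lambda>g2 g3. g3 = 0\<^sub>v ny) xi
     = deepc_opt Wp Uf Yf J Uc Yc (\<lambda>a. lambda_a * sqnorm a) (\<lambda>a. PiPerp *\<^sub>v a = 0\<^sub>v l) xi
   \<and> gamma_ddpc_opt L11 L21 L22 L31 L32 L33 J Uc Yc
        (\<lambda>g1 g2 g3. lambda_a * sqnorm g2) (\<lambda>g2 g3. g3 = 0\<^sub>v ny) xi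
     = spc_opt Wp Uf Yf J Uc Yc
        (\<lambda>xi' u y. lambda_a * wsqnorm R_reg (u - Uf * pinv Wp *\<^sub>v xi')) xi
   \<and> deepc_opt Wp Uf Yf J Uc Yc (\<lambda>a. lambda_a * sqnorm (Proj *\<^sub>v a)) (\<lambda>a. PiPerp *\<^sub>v a = 0\<^sub>v l) xi
     = spc_opt Wp Uf Yf J Uc Yc
        (\<lambda>xi' u y. lambda_a * wsqnorm R_reg (u - Uf * pinv Wp *\<^sub>v xi')) xi"
      using gam dp1 dp2 spc by simp
  qed
qed

end
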